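(* Let $V=\mathbb{C}^4$, with basis $e_1,\dots,e_4$ and dual basis $\alpha_1,\dots,\alpha_4$. Let $$T_4=\sum_{1\le i<j\le 4}\big(\alpha_i\otimes\alpha_j-\alpha_j\otimes\alpha_i\big)\otimes(e_i\wedge e_j)\in V^*\otimes V^*\otimes\Lambda^2V\cong\mathbb{C}^4\otimes\mathbb{C}^4\otimes\mathbb{C}^6.$$ Then $\underline{R}(T_4)=8$.
   Context: The border rank $\underline{R}(T)$ is the smallest $r$ such that $T$ is a limit of sums of $r$ rank-one tensors. *)

theory Defs
  imports Complex_Main
begin

text \<open>A tensor in C^I (x) C^J (x) C^K, for finite index sets I, J, K, is given by its
coordinate function T :: 'a => 'b => 'c => complex (values outside I x J x K irrelevant).
T has border rank at most r iff it is a limit (coordinatewise, equivalently in the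
Euclidean topology of the finite-dimensional space) of a sequence of such sums.\<close>

definition border_rank_le ::
  "'a set \<Rightarrow> 'b set \<Rightarrow> 'c set \<Rightarrow> ('a \<Rightarrow> 'b \<Rightarrow> 'c \<Rightarrow> complex) \<Rightarrow> nat \<Rightarrow> bool" where
  "border_rank_le I J K T r \<longleftrightarrow>
     (\<exists>(a :: nat \<Rightarrow> nat \<Rightarrow> 'a \<Rightarrow> complex) (b :: nat \<Rightarrow> nat \<Rightarrow> 'b \<Rightarrow> complex)
        (c :: nat \<Rightarrow> nat \<Rightarrow> 'c \<Rightarrow> complex).
        \<forall>i\<in>I. \<forall>j\<in>J. \<forall>k\<in>K.
          (\<lambda>n. \<Sum>l<r. a n l i * b n l j * c n l k) \<longlonglongrightarrow> T i j k)"

definition border_rank ::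
  "'a set \<Rightarrow> 'b set \<Rightarrow> 'c set \<Rightarrow> ('a \<Rightarrow> 'b \<Rightarrow> 'c \<Rightarrow> complex) \<Rightarrow> nat" where
  "border_rank I J K T = (LEAST r. border_rank_le I J K T r)"

text \<open>Index set of the basis e_i wedge e_j (i<j) of Lambda^2 C^4, indices 0..3.\<close>
definition wedge_idx :: "(nat \<times> nat) set" where
  "wedge_idx = {(i, j). i < j \<and> j < 4}"

text \<open>Coefficient of alpha_a (x) alpha_b (x) (e_i wedge e_j) in T_4.\<close>
definition T4 :: "nat \<Rightarrow> nat \<Rightarrow> nat \<times> nat \<Rightarrow> complex" where
  "T4 a b p = (case p of (i, j) \<Rightarrow>
      if a = i \<and> b = j then 1 else if a = j \<and> b = i then -1 else 0)"

end

theory Submission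
  imports Defs "HOL-Analysis.Analysis" "HOL-Computational_Algebra.Polynomial"
begin

section \<open>Lower bound via a Koszul flattening\<close>


lemma det_lowrank:
  fixes u v :: "'k \<Rightarrow> 'a::field^'n"
  assumes fin: "finite K" and cK: "card K < CARD('n)"
  shows "det (\<chi> i j. \<Sum>\<kappa>\<in>K. u \<kappa> $ i * v \<kappa> $ j) = 0"
proof -
  have "card K \<le> card (UNIV::'n set)" using cK by simp
  then obtain f where fK: "f ` K \<subseteq> (UNIV::'n set)" and inj: "inj_on f K"
    using card_le_inj[OF fin finite[of "UNIV::'n set"]] by blast
  have "card (f ` K) < CARD('n)" using cK card_image[OF inj] by simp
  then obtain s0 where s0: "s0 \<notin> f ` K"
  proof -
    assume h: "\<And>s0. s0 \<notin> f ` K \<Longrightarrow> thesis"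
    show thesis
    proof (rule ccontr)
      assume "\<not> thesis"
      then have "f ` K = UNIV" using h by blast
      then show False using \<open>card (f ` K) < CARD('n)\<close> by simp
    qed
  qed
  define g where "g = inv_into K f"
  define U :: "'a^'n^'n" where "U = (\<chi> i s. if s \<in> f ` K then u (g s) $ i else 0)"
  define Wm :: "'a^'n^'n" where "Wm = (\<chi> s j. if s \<in> f ` K then v (g s) $ j else 0)"
  have "U ** Wm = (\<chi> i j. \<Sum>\<kappa>\<in>K. u \<kappa> $ i * v \<kappa> $ j)"
  proof -
    have "(U ** Wm) $ i $ j = (\<Sum>\<kappa>\<in>K. u \<kappa> $ i * v \<kappa> $ j)" for i j
    proof -
      have "(U ** Wm) $ i $ j = (\<Sum>s\<in>UNIV. if s \<in> f ` K then u (g s) $ i * v (g s) $ j else 0)"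
        by (simp add: matrix_matrix_mult_def U_def Wm_def if_distrib cong: if_cong)
      also have "\<dots> = (\<Sum>s\<in>f ` K. u (g s) $ i * v (g s) $ j)"
        by (simp add: sum.If_cases Int_absorb1)
      also have "\<dots> = (\<Sum>\<kappa>\<in>K. u \<kappa> $ i * v \<kappa> $ j)"
        by (simp add: sum.reindex[OF inj] g_def inv_into_f_f[OF inj])
      finally show ?thesis .
    qed
    then show ?thesis by (simp add: vec_eq_iff)
  qed
  moreover have "column s0 U = 0"
    by (simp add: column_def U_def s0 vec_eq_iff)
  then have "det U = 0" by (rule det_zero_column(2))
  ultimately show ?thesis by (metis det_mul mult_zero_left)
qed

lemma det_tendsto:
  fixes M :: "nat \<Rightarrow> 'a::{real_normed_field}^'n^'n"
  assumes "\<And>i j. (\<lambda>n. M n $ i $ j) \<longlonglongrightarrow> L $ i $ j"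
  shows "(\<lambda>n. det (M n)) \<longlonglongrightarrow> det L"
  unfolding det_def
  by (intro tendsto_sum tendsto_mult tendsto_const tendsto_prod assms)



datatype i4 = A0 | A1 | A2 | A3
datatype i6 = P01 | P02 | P03 | P12 | P13 | P23

lemma UNIV_i4: "(UNIV::i4 set) = {A0, A1, A2, A3}"
  using i4.exhaust by auto
lemma UNIV_i6: "(UNIV::i6 set) = {P01, P02, P03, P12, P13, P23}"
  using i6.exhaust by auto

instance i4 :: finite by standard (simp add: UNIV_i4)
instance i6 :: finite by standard (simp add: UNIV_i6)

fun toN :: "i4 \<Rightarrow> nat" where
  "toN A0 = 0" | "toN A1 = 1" | "toN A2 = 2" | "toN A3 = 3"
fun toP :: "i6 \<Rightarrow> nat \<times> nat" where
  "toP P01 = (0,1)" | "toP P02 = (0,2)" | "toP P03 = (0,3)"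
| "toP P12 = (1,2)" | "toP P13 = (1,3)" | "toP P23 = (2,3)"

definition sw :: "i4 \<Rightarrow> i4 \<Rightarrow> i6 \<Rightarrow> complex" where
  "sw a' a p = (if toP p = (toN a', toN a) then 1 else if toP p = (toN a, toN a') then -1 else 0)"

definition KF :: "(nat \<Rightarrow> nat \<Rightarrow> nat \<times> nat \<Rightarrow> complex) \<Rightarrow> complex^(i4\<times>i6)^(i4\<times>i6)" where
  "KF T = (\<chi> r s. case r of (b,p) \<Rightarrow> case s of (a,c) \<Rightarrow>
      \<Sum>a'\<in>UNIV. sw a' a p * T (toN a') (toN b) (toP c))"

lemma T4_sw: "T4 (toN a') (toN b) (toP c) = sw a' b c"
  by (cases c) (simp_all add: T4_def sw_def)

lemma KF_T4_row: "(\<Sum>s\<in>UNIV. KF T4 $ (b,p) $ s * v $ s) =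
   (\<Sum>a\<in>UNIV. \<Sum>c\<in>UNIV. (\<Sum>a'\<in>UNIV. sw a' a p * sw a' b c) * v $ (a,c))"
  unfolding sum.cartesian_product UNIV_Times_UNIV
  by (rule sum.cong) (auto simp add: KF_def T4_sw)

lemma KF_T4_aux: "(\<Sum>a\<in>UNIV. \<Sum>c\<in>UNIV. (\<Sum>a'\<in>UNIV. sw a' a P01 * sw a' A0 c) * v $ (a,c)) = 0 \<Longrightarrow> (\<Sum>a\<in>UNIV. \<Sum>c\<in>UNIV. (\<Sum>a'\<in>UNIV. sw a' a P02 * sw a' A0 c) * v $ (a,c)) = 0 \<Longrightarrow> (\<Sum>a\<in>UNIV. \<Sum>c\<in>UNIV. (\<Sum>a'\<in>UNIV. sw a' a P03 * sw a' A0 c) * v $ (a,c)) = 0 \<Longrightarrow> (\<Sum>a\<in>UNIV. \<Sum>c\<in>UNIV. (\<Sum>a'\<in>UNIV. sw a' a P12 * sw a' A0 c) * v $ (a,c)) = 0 \<Longrightarrow> (\<Sum>a\<in>UNIV. \<Sum>c\<in>UNIV. (\<Sum>a'\<in>UNIV. sw a' a P13 * sw a' A0 c) * v $ (a,c)) = 0 \<Longrightarrow> (\<Sum>a\<in>UNIV. \<Sum>c\<in>UNIV. (\<Sum>a'\<in>UNIV. sw a' a P23 * sw a' A0 c) * v $ (a,c)) = 0 \<Longrightarrow> (\<Sum>a\<in>UNIV. \<Sum>c\<in>UNIV. (\<Sum>a'\<in>UNIV. sw a' a P01 * sw a' A1 c) * v $ (a,c)) = 0 \<Longrightarrow> (\<Sum>a\<in>UNIV.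 \<Sum>c\<in>UNIV. (\<Sum>a'\<in>UNIV. sw a' a P02 * sw a' A1 c) * v $ (a,c)) = 0 \<Longrightarrow> (\<Sum>a\<in>UNIV. \<Sum>c\<in>UNIV. (\<Sum>a'\<in>UNIV. sw a' a P03 * sw a' A1 c) * v $ (a,c)) = 0 \<Longrightarrow> (\<Sum>a\<in>UNIV. \<Sum>c\<in>UNIV. (\<Sum>a'\<in>UNIV. sw a' a P12 * sw a' A1 c) * v $ (a,c)) = 0 \<Longrightarrow> (\<Sum>a\<in>UNIV. \<Sum>c\<in>UNIV. (\<Sum>a'\<in>UNIV. sw a' a P13 * sw a' A1 c) * v $ (a,c)) = 0 \<Longrightarrow> (\<Sum>a\<in>UNIV. \<Sum>c\<in>UNIV. (\<Sum>a'\<in>UNIV. sw a' a P23 * sw a' A1 c) * v $ (a,c)) = 0 \<Longrightarrow> (\<Sum>a\<in>UNIV. \<Sum>c\<in>UNIV. (\<Sum>a'\<in>UNIV. sw a' a P01 * sw a' A2 c) * v $ (a,c)) = 0 \<Longrightarrow> (\<Sum>a\<in>UNIV. \<Sum>c\<in>UNIV. (\<Sum>a'\<in>UNIV. sw a' a P02 * sw a' A2 c) * v $ (a,c)) = 0 \<Longrightarrow> (\<Sum>a\<in>UNIV. \<Sum>c\<in>UNIV. (\<Sum>a'\<in>UNIV. sw a' a P03 * sw a' A2 c) * v $ (a,c)) = 0 \<Longrightarrow> (\<Sum>a\<in>UNIV. \<Sum>c\<in>UNIV. (\<Sum>a'\<in>UNIV. sw a' a P12 * sw a' A2 c) * v $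 (a,c)) = 0 \<Longrightarrow> (\<Sum>a\<in>UNIV. \<Sum>c\<in>UNIV. (\<Sum>a'\<in>UNIV. sw a' a P13 * sw a' A2 c) * v $ (a,c)) = 0 \<Longrightarrow> (\<Sum>a\<in>UNIV. \<Sum>c\<in>UNIV. (\<Sum>a'\<in>UNIV. sw a' a P23 * sw a' A2 c) * v $ (a,c)) = 0 \<Longrightarrow> (\<Sum>a\<in>UNIV. \<Sum>c\<in>UNIV. (\<Sum>a'\<in>UNIV. sw a' a P01 * sw a' A3 c) * v $ (a,c)) = 0 \<Longrightarrow> (\<Sum>a\<in>UNIV. \<Sum>c\<in>UNIV. (\<Sum>a'\<in>UNIV. sw a' a P02 * sw a' A3 c) * v $ (a,c)) = 0 \<Longrightarrow> (\<Sum>a\<in>UNIV. \<Sum>c\<in>UNIV. (\<Sum>a'\<in>UNIV. sw a' a P03 * sw a' A3 c) * v $ (a,c)) = 0 \<Longrightarrow> (\<Sum>a\<in>UNIV. \<Sum>c\<in>UNIV. (\<Sum>a'\<in>UNIV. sw a' a P12 * sw a' A3 c) * v $ (a,c)) = 0 \<Longrightarrow> (\<Sum>a\<in>UNIV. \<Sum>c\<in>UNIV. (\<Sum>a'\<in>UNIV. sw a' a P13 * sw a' A3 c) * v $ (a,c)) = 0 \<Longrightarrow> (\<Sum>a\<in>UNIV. \<Sum>c\<in>UNIV. (\<Sum>a'\<in>UNIV. sw a' a P23 * sw a' A3 c) * v $ (a,c)) = 0 \<Longrightarrow> v $ (x,y) = 0"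
  apply (simp only: UNIV_i4 UNIV_i6)
  apply (simp add: sw_def)
  apply (cases x; cases y; simp)
  done

lemma KF_T4_inj:
  assumes "KF T4 *v v = 0"
  shows "v = 0"
proof -
  have r: "\<And>b p. (\<Sum>a\<in>UNIV. \<Sum>c\<in>UNIV. (\<Sum>a'\<in>UNIV. sw a' a p * sw a' b c) * v $ (a,c)) = 0"
  proof -
    fix b p
    have "(KF T4 *v v) $ (b,p) = 0" using assms by simp
    then show "(\<Sum>a\<in>UNIV. \<Sum>c\<in>UNIV. (\<Sum>a'\<in>UNIV. sw a' a p * sw a' b c) * v $ (a,c)) = 0"
      by (simp add: matrix_vector_mult_def KF_T4_row)
  qed
  have "v $ xy = 0" for xy
    using KF_T4_aux[OF r[where b=A0 and p=P01] r[where b=A0 and p=P02] r[where b=A0 and p=P03] r[where b=A0 and p=P12] r[where b=A0 and p=P13] r[where b=A0 and p=P23] r[where b=A1 and p=P01] r[where b=A1 and p=P02] r[where b=A1 and p=P03] r[where b=A1 and p=P12] r[where b=A1 and p=P13] r[where b=A1 and p=P23] r[where b=A2 and p=P01] r[where b=A2 and p=P02] r[where b=A2 and p=P03] r[where b=A2 and p=P12] r[where b=A2 and p=P13] r[where b=A2 and p=P23] r[where b=A3 and p=P01] r[where b=A3 and p=P02] r[where b=A3 and p=P03] r[where b=A3 and p=P12] r[where b=A3 and p=P13] r[where b=A3 and p=P23], of "fst xy" "snd xy"] by simp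
  then show ?thesis by (simp add: vec_eq_iff)
qed

lemma det_KF_T4: "det (KF T4) \<noteq> 0"
proof -
  obtain B where "B ** KF T4 = mat 1"
    using matrix_left_invertible_ker[of "KF T4"] KF_T4_inj by blast
  then have "det B * det (KF T4) = 1" by (metis det_I det_mul)
  then show ?thesis by auto
qed



definition wx :: "(nat \<Rightarrow> complex) \<Rightarrow> i4 \<Rightarrow> i6 \<Rightarrow> complex" where
  "wx x a p = (\<Sum>a'\<in>UNIV. sw a' a p * x (toN a'))"

definition piv :: "(nat \<Rightarrow> complex) \<Rightarrow> i4" where
  "piv x = (if \<exists>a. x (toN a) \<noteq> 0 then SOME a. x (toN a) \<noteq> 0 else A0)"

definition mcoef :: "(nat \<Rightarrow> complex) \<Rightarrow> i4 \<Rightarrow> i4 \<Rightarrow> complex" where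
  "mcoef x a a2 = (if a = a2 then 1 else 0) - (if a = piv x then x (toN a2) / x (toN (piv x)) else 0)"

lemma wx_antisym: "(\<Sum>a2\<in>UNIV. x (toN a2) * wx x a2 p) = 0"
  by (cases p) (simp_all add: wx_def UNIV_i4 sw_def algebra_simps)

lemma wx_factor: "wx x a p = (\<Sum>a2\<in>UNIV - {piv x}. wx x a2 p * mcoef x a a2)"
proof (cases "\<exists>a. x (toN a) \<noteq> 0")
  case False
  then have "wx x a2 p = 0" for a2 by (simp add: wx_def)
  then show ?thesis by simp
next
  case True
  define k where "k = piv x"
  have xk: "x (toN k) \<noteq> 0" unfolding k_def piv_def using someI_ex[OF True] True by simp
  show ?thesis
  proof (cases "a = k")
    case False
    have "(\<Sum>a2\<in>UNIV - {k}. wx x a2 p * mcoef x a a2) = (\<Sum>a2\<in>UNIV - {k}. if a = a2 then wx x a2 p else 0)"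
      by (rule sum.cong) (auto simp: mcoef_def k_def[symmetric] False)
    also have "\<dots> = wx x a p" using False by (simp add: sum.delta)
    finally show ?thesis by (simp add: k_def)
  next
    case True
    have s: "(\<Sum>a2\<in>UNIV. x (toN a2) * wx x a2 p) = x (toN k) * wx x k p + (\<Sum>a2\<in>UNIV - {k}. x (toN a2) * wx x a2 p)"
      by (simp add: sum.remove[of UNIV k])
    have "(\<Sum>a2\<in>UNIV - {k}. wx x a2 p * mcoef x a a2) = (\<Sum>a2\<in>UNIV - {k}. - (x (toN a2) * wx x a2 p) / x (toN k))"
      by (rule sum.cong) (auto simp: mcoef_def k_def[symmetric] True)
    also have "\<dots> = - (\<Sum>a2\<in>UNIV - {k}. x (toN a2) * wx x a2 p) / x (toN k)"
      by (simp add: sum_divide_distrib sum_negf)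
    also have "\<dots> = wx x k p" using s wx_antisym[of x p] xk
      by (simp add: field_simps) (metis add.commute add_eq_0_iff minus_mult_left mult.commute)
    finally show ?thesis by (simp add: k_def True)
  qed
qed


definition Uv :: "(nat \<Rightarrow> nat \<Rightarrow> complex) \<Rightarrow> (nat \<Rightarrow> nat \<Rightarrow> complex) \<Rightarrow> nat \<times> i4 \<Rightarrow> complex^(i4\<times>i6)" where
  "Uv x y \<kappa> = (\<chi> r. y (fst \<kappa>) (toN (fst r)) * wx (x (fst \<kappa>)) (snd \<kappa>) (snd r))"
definition Wv :: "(nat \<Rightarrow> nat \<Rightarrow> complex) \<Rightarrow> (nat \<Rightarrow> nat \<times> nat \<Rightarrow> complex) \<Rightarrow> nat \<times> i4 \<Rightarrow> complex^(i4\<times>i6)" where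
  "Wv x z \<kappa> = (\<chi> s. z (fst \<kappa>) (toP (snd s)) * mcoef (x (fst \<kappa>)) (fst s) (snd \<kappa>))"

lemma KF_sum:
  "KF (\<lambda>i j k. \<Sum>l<r. x l i * y l j * z l k) =
   (\<chi> rr ss. \<Sum>\<kappa>\<in>Sigma {..<r} (\<lambda>l. UNIV - {piv (x l)}). Uv x y \<kappa> $ rr * Wv x z \<kappa> $ ss)"
proof -
  have "KF (\<lambda>i j k. \<Sum>l<r. x l i * y l j * z l k) $ (b,p) $ (a,c) =
     (\<Sum>\<kappa>\<in>Sigma {..<r} (\<lambda>l. UNIV - {piv (x l)}). Uv x y \<kappa> $ (b,p) * Wv x z \<kappa> $ (a,c))" for b p a c
  proof -
    have "KF (\<lambda>i j k. \<Sum>l<r. x l i * y l j * z l k) $ (b,p) $ (a,c)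
       = (\<Sum>a'\<in>UNIV. sw a' a p * (\<Sum>l<r. x l (toN a') * y l (toN b) * z l (toP c)))"
      by (simp add: KF_def)
    also have "\<dots> = (\<Sum>l<r. y l (toN b) * z l (toP c) * wx (x l) a p)"
      by (simp add: wx_def sum_distrib_left sum_distrib_right mult_ac sum.swap[of _ UNIV])
    also have "\<dots> = (\<Sum>l<r. \<Sum>a2\<in>UNIV - {piv (x l)}. (y l (toN b) * wx (x l) a2 p) * (z l (toP c) * mcoef (x l) a a2))"
      by (subst wx_factor) (simp add: sum_distrib_left mult_ac)
    also have "\<dots> = (\<Sum>\<kappa>\<in>Sigma {..<r} (\<lambda>l. UNIV - {piv (x l)}). Uv x y \<kappa> $ (b,p) * Wv x z \<kappa> $ (a,c))"
      by (simp add: sum.Sigma Uv_def Wv_def split_def)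
    finally show ?thesis .
  qed
  then show ?thesis by (simp add: vec_eq_iff)
qed

lemma card_i4: "CARD(i4) = 4" by (simp add: UNIV_i4)
lemma card_i6: "CARD(i6) = 6" by (simp add: UNIV_i6)

lemma det_KF_7:
  fixes x y :: "nat \<Rightarrow> nat \<Rightarrow> complex" and z :: "nat \<Rightarrow> nat \<times> nat \<Rightarrow> complex"
  shows "det (KF (\<lambda>i j k. \<Sum>l<7. x l i * y l j * z l k)) = 0"
proof -
  have c: "card (Sigma {..<7::nat} (\<lambda>l. (UNIV::i4 set) - {piv (x l)})) = 21"
    by (simp add: card_SigmaI card_i4)
  have "CARD(i4 \<times> i6) = 24" by (simp add: card_i4 card_i6)
  then show ?thesis unfolding KF_sum
    by (intro det_lowrank) (simp_all add: c)
qed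


lemma toN_lt: "toN a < 4" by (cases a) simp_all
lemma toP_w: "toP c \<in> wedge_idx" by (cases c) (simp_all add: wedge_idx_def)

lemma not_br7: "\<not> border_rank_le {..<4} {..<4} wedge_idx T4 7"
proof
  assume "border_rank_le {..<4} {..<4} wedge_idx T4 7"
  then obtain a b c :: "nat \<Rightarrow> nat \<Rightarrow> nat \<Rightarrow> complex" and cc :: "nat \<Rightarrow> nat \<Rightarrow> nat \<times> nat \<Rightarrow> complex"
    where conv: "\<forall>i\<in>{..<4}. \<forall>j\<in>{..<4}. \<forall>k\<in>wedge_idx.
          (\<lambda>n. \<Sum>l<7. a n l i * b n l j * cc n l k) \<longlonglongrightarrow> T4 i j k"
    unfolding border_rank_le_def by blast
  define S where "S n = (\<lambda>i j k. \<Sum>l<7. a n l i * b n l j * cc n l k)" for n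
  have "(\<lambda>n. det (KF (S n))) \<longlonglongrightarrow> det (KF T4)"
  proof (rule det_tendsto)
    fix r s :: "i4 \<times> i6"
    obtain bb p where r: "r = (bb,p)" by (cases r)
    obtain aa q where s: "s = (aa,q)" by (cases s)
    have "(\<lambda>n. \<Sum>a'\<in>UNIV. sw a' aa p * S n (toN a') (toN bb) (toP q))
        \<longlonglongrightarrow> (\<Sum>a'\<in>UNIV. sw a' aa p * T4 (toN a') (toN bb) (toP q))"
      apply (intro tendsto_sum tendsto_mult_left)
      using conv toN_lt toP_w unfolding S_def by blast
    then show "(\<lambda>n. KF (S n) $ r $ s) \<longlonglongrightarrow> KF T4 $ r $ s"
      by (simp add: KF_def r s)
  qed
  moreover have "det (KF (S n)) = 0" for n
    unfolding S_def by (rule det_KF_7)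
  ultimately have "det (KF T4) = 0"
    using LIMSEQ_unique[OF _ tendsto_const[of 0]] by simp
  with det_KF_T4 show False by simp
qed

lemma br_mono:
  assumes "border_rank_le I J K T r" "r \<le> s"
  shows "border_rank_le I J K T s"
proof -
  obtain a b c where h: "\<forall>i\<in>I. \<forall>j\<in>J. \<forall>k\<in>K. (\<lambda>n. \<Sum>l<r. a n l i * b n l j * c n l k) \<longlonglongrightarrow> T i j k"
    using assms(1) unfolding border_rank_le_def by blast
  define a' where "a' n l i = (if l < r then a n l i else 0)" for n l i
  have "(\<Sum>l<s. a' n l i * b n l j * c n l k) = (\<Sum>l<r. a n l i * b n l j * c n l k)" for n i j k
  proof -
    have "(\<Sum>l<s. a' n l i * b n l j * c n l k) = (\<Sum>l\<in>{..<r}. a' n l i * b n l j * c n l k)"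
      using assms(2) by (intro sum.mono_neutral_right) (auto simp: a'_def)
    then show ?thesis by (simp add: a'_def)
  qed
  then show ?thesis unfolding border_rank_le_def using h by (intro exI[of _ a'] exI[of _ b] exI[of _ c]) simp
qed

lemma lower: "border_rank_le {..<4} {..<4} wedge_idx T4 r \<Longrightarrow> 8 \<le> r"
proof (rule ccontr)
  assume a: "border_rank_le {..<4} {..<4} wedge_idx T4 r" and "\<not> 8 \<le> r"
  then have "r \<le> 7" by simp
  from br_mono[OF a this] not_br7 show False by simp
qed


section \<open>Upper bound via an explicit degeneration\<close>



definition tt :: "nat \<Rightarrow> complex" where "tt n = of_real (inverse (real (Suc n)))"

lemma tt_lim: "tt \<longlonglongrightarrow> 0"
proof -
  have h: "(\<lambda>n. complex_of_real (inverse (real (Suc n)))) \<longlonglongrightarrow> complex_of_real 0"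
    by (rule tendsto_of_real[OF LIMSEQ_inverse_real_of_nat])
  show ?thesis using h unfolding tt_def by (simp only: of_real_0)
qed

lemma tt_nz: "tt n \<noteq> 0" unfolding tt_def by (simp only: of_real_eq_0_iff) simp

lemma lim_poly:
  fixes P :: "complex poly"
  assumes "coeff P 0 = 0" "coeff P 1 = 0" "coeff P 2 = 0"
  shows "(\<lambda>n. poly P (tt n) / (tt n)^3) \<longlonglongrightarrow> coeff P 3"
proof -
  have "monom 1 3 dvd P" unfolding monom_1_dvd_iff'
  proof (intro allI impI)
    fix k :: nat assume "k < 3"
    then have "k = 0 \<or> k = 1 \<or> k = 2" by auto
    then show "coeff P k = 0" using assms by auto
  qed
  then obtain Q where PQ: "P = monom 1 3 * Q" by (auto elim: dvdE)
  have eq: "poly P (tt n) / (tt n)^3 = poly Q (tt n)" for n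
    using tt_nz[of n] by (simp add: PQ poly_monom)
  have "(\<lambda>n. poly Q (tt n)) \<longlonglongrightarrow> poly Q 0"
    by (intro tendsto_poly tt_lim)
  moreover have "poly Q 0 = coeff P 3"
    by (simp add: PQ poly_0_coeff_0 coeff_monom_mult)
  ultimately show ?thesis by (simp add: eq)
qed

definition pa :: "nat \<Rightarrow> nat \<Rightarrow> complex poly" where
  "pa l i = (if l = 0 then (if i = 0 then 1 else if i = 3 then [:0, 0, 1:] else 0)
   else if l = 1 then (if i = 0 then 1 else if i = 2 then [:0, 1:] else 0)
   else if l = 2 then (if i = 0 then 1 else if i = 3 then [:0, 1:] else 0)
   else if l = 3 then (if i = 1 then 1 else if i = 3 then [:0, 0, - 1:] else 0)
   else if l = 4 then (if i = 1 then 1 else if i = 2 then [:0, 1:] else 0)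
   else if l = 5 then (if i = 1 then 1 else if i = 3 then [:0, 1:] else 0)
   else if l = 6 then (if i = 0 then 1 else if i = 1 then 1 else if i = 2 then [:0, 1:] else 0)
   else if l = 7 then (if i = 0 then 1 else if i = 1 then (-1) else if i = 3 then [:0, 0, 1:] else 0)
   else 0)"

definition pb :: "nat \<Rightarrow> nat \<Rightarrow> complex poly" where
  "pb l i = (if l = 0 then (if i = 0 then 1 else if i = 3 then [:0, 0, 1:] else 0)
   else if l = 1 then (if i = 0 then 1 else if i = 2 then [:0, - 1:] else 0)
   else if l = 2 then (if i = 0 then 1 else if i = 3 then [:0, - 1:] else 0)
   else if l = 3 then (if i = 1 then 1 else if i = 3 then [:0, 0, - 1:] else 0)
   else if l = 4 then (if i = 1 then 1 else if i = 2 then [:0, - 1:] else 0)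
   else if l = 5 then (if i = 1 then 1 else if i = 3 then [:0, - 1:] else 0)
   else if l = 6 then (if i = 0 then 1 else if i = 1 then (-1) else if i = 3 then [:0, 0, 1:] else 0)
   else if l = 7 then (if i = 0 then 1 else if i = 1 then 1 else if i = 2 then [:0, - 1:] else 0)
   else 0)"

definition pc :: "nat \<Rightarrow> nat \<times> nat \<Rightarrow> complex poly" where
  "pc l k = (if l = 0 then (if k = (2,3) then (-1) else if k = (0,2) then [:0, 0, 1:] else if k = (0,3) then [:0, 0, 1:] else if k = (0,1) then [:0, 0, 0, 1:] else 0)
   else if l = 1 then (if k = (2,3) then (-1) else if k = (0,2) then [:0, 0, - 1:] else 0)
   else if l = 2 then (if k = (0,3) then [:0, 0, - 1:] else 0)
   else if l = 3 then (if k = (2,3) then 1 else if k = (1,2) then [:0, 0, 1:] else if k = (1,3) then [:0, 0, 1:] else if k = (0,1) then [:0, 0, 0, - 1:] else 0)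
   else if l = 4 then (if k = (2,3) then 1 else if k = (1,2) then [:0, 0, - 1:] else 0)
   else if l = 5 then (if k = (1,3) then [:0, 0, - 1:] else 0)
   else if l = 6 then (if k = (2,3) then 1 else if k = (0,1) then [:0, 0, 0, - 1:] else 0)
   else if l = 7 then (if k = (2,3) then 1 else 0)
   else 0)"

definition PP :: "nat \<Rightarrow> nat \<Rightarrow> nat \<times> nat \<Rightarrow> complex poly" where
  "PP i j k = (\<Sum>l<8. pa l i * pb l j * pc l k)"


lemma wedge_idx_eq: "wedge_idx = {(0,1),(0,2),(0,3),(1,2),(1,3),(2,3)}"
  unfolding wedge_idx_def by auto

lemma PP_coeffs:
  assumes "i < 4" "j < 4" "k \<in> wedge_idx"
  shows "coeff (PP i j k) 0 = 0 \<and> coeff (PP i j k) 1 = 0 \<and> coeff (PP i j k) 2 = 0 \<and> coeff (PP i j k) 3 = T4 i j k"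
proof -
  have i: "i = 0 \<or> i = 1 \<or> i = 2 \<or> i = 3" using assms(1) by auto
  have j: "j = 0 \<or> j = 1 \<or> j = 2 \<or> j = 3" using assms(2) by auto
  have k: "k = (0,1) \<or> k = (0,2) \<or> k = (0,3) \<or> k = (1,2) \<or> k = (1,3) \<or> k = (2,3)"
    using assms(3) by (auto simp: wedge_idx_eq)
  show ?thesis
    using i j k
    by (elim disjE) (simp_all add: PP_def pa_def pb_def pc_def T4_def numeral_eq_Suc lessThan_Suc)
qed

lemma upper: "border_rank_le {..<4} {..<4} wedge_idx T4 8"
  unfolding border_rank_le_def
proof (intro exI ballI)
  fix i j k assume h: "i \<in> {..<4::nat}" "j \<in> {..<4::nat}" "k \<in> wedge_idx"
  have eq: "(\<Sum>l<8. poly (pa l i) (tt n) * poly (pb l j) (tt n) * (poly (pc l k) (tt n) / (tt n)^3))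
      = poly (PP i j k) (tt n) / (tt n)^3" for n
    by (simp add: PP_def poly_sum sum_divide_distrib)
  have c: "coeff (PP i j k) 0 = 0 \<and> coeff (PP i j k) 1 = 0 \<and> coeff (PP i j k) 2 = 0 \<and> coeff (PP i j k) 3 = T4 i j k"
    using h by (intro PP_coeffs) auto
  show "(\<lambda>n. \<Sum>l<8. poly (pa l i) (tt n) * poly (pb l j) (tt n) * (poly (pc l k) (tt n) / (tt n)^3)) \<longlonglongrightarrow> T4 i j k"
    unfolding eq using lim_poly[of "PP i j k"] c by simp
qed


theorem proposition6:
  shows "border_rank {..<4} {..<4} wedge_idx T4 = 8"
  unfolding border_rank_def
  by (rule Least_equality) (use upper lower in auto)

end
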